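(* Let $C$ be the set of numbers $\sum_{n\ge1}c_n10^{-n}$ with all $c_n\in\{0,1\}$, and $D$ the set of numbers $\sum_{n\ge1}d_n10^{-n}$ with all $d_n\in\{0,2\}$. Then there is no set $E\subset C$ of positive Hausdorff dimension together with $a\in\mathbb{R}$ such that $E+a\subset D$. *)

theory Defs
  imports "HOL-Analysis.Analysis"
begin

definition hausdorff_pre :: "real \<Rightarrow> real \<Rightarrow> 'a::metric_space set \<Rightarrow> ennreal" where
  "hausdorff_pre s \<delta> E =
     (INF U \<in> {U :: nat \<Rightarrow> 'a set. E \<subseteq> (\<Union>i. U i) \<and> (\<forall>i. bounded (U i) \<and> diameter (U i) \<le> \<delta>)}.
        (\<Sum>i. ennreal (diameter (U i) powr s)))"

definition hausdorff_measure :: "real \<Rightarrow> 'a::metric_space set \<Rightarrow> ennreal" where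
  "hausdorff_measure s E = (SUP \<delta> \<in> {0<..}. hausdorff_pre s \<delta> E)"

text \<open>Hausdorff dimension: inf of the s > 0 with H^s(E) = 0 (infimum of empty set is infinity).\<close>
definition hausdorff_dim :: "'a::metric_space set \<Rightarrow> ereal" where
  "hausdorff_dim E = Inf {ereal s | s. s > 0 \<and> hausdorff_measure s E = 0}"

definition digitsC :: "real set" where
  "digitsC = {x. \<exists>c :: nat \<Rightarrow> nat. (\<forall>n. c n \<in> {0,1}) \<and> x = (\<Sum>n. real (c n) / 10 ^ Suc n)}"

definition digitsD :: "real set" where
  "digitsD = {x. \<exists>d :: nat \<Rightarrow> nat. (\<forall>n. d n \<in> {0,2}) \<and> x = (\<Sum>n. real (d n) / 10 ^ Suc n)}"

end

theory Submission
  imports Defs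
begin

lemma geo_summ: "summable (\<lambda>i. (B::real) * (1/10)^i)"
  by (rule summable_mult, rule summable_geometric) simp

lemma digits_summable:
  fixes e :: "nat \<Rightarrow> int"
  assumes b: "\<And>n. \<bar>e n\<bar> \<le> 4"
  shows "summable (\<lambda>n. real_of_int (e n) / 10^Suc n)"
proof (rule summable_comparison_test'[OF geo_summ[of 4], of 0])
  fix n :: nat
  have "\<bar>real_of_int (e n)\<bar> \<le> 4" using b[of n] by linarith
  hence "\<bar>real_of_int (e n)\<bar> / 10^Suc n \<le> 4 / 10^Suc n"
    by (intro divide_right_mono) simp_all
  also have "\<dots> \<le> 4 * (1/10)^n" by (simp add: power_divide field_simps)
  finally show "norm (real_of_int (e n) / 10^Suc n) \<le> 4 * (1/10)^n" by simp
qed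

lemma digits_zero:
  fixes e :: "nat \<Rightarrow> int"
  assumes b: "\<And>n. \<bar>e n\<bar> \<le> 4" and s: "(\<Sum>n. real_of_int (e n) / 10^Suc n) = 0"
  shows "e n = 0"
proof (induction n rule: less_induct)
  case (less n)
  define f where "f = (\<lambda>n. real_of_int (e n) / 10^Suc n)"
  have sf: "summable f" unfolding f_def by (rule digits_summable[OF b])
  have "sum f {..<n} = 0" using less unfolding f_def by simp
  hence z: "(\<Sum>i. f (i + n)) = 0" using suminf_split_initial_segment[OF sf, of n] s
    unfolding f_def by simp
  define g where "g = (\<lambda>i. f (i + n))"
  have sg: "summable g" unfolding g_def using sf by (rule summable_ignore_initial_segment)
  have sg1: "summable (\<lambda>i. g (Suc i))" using summable_ignore_initial_segment[OF sg, of 1] by simp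
  have h: "g 0 + (\<Sum>i. g (Suc i)) = 0" using suminf_split_head[OF sg] z unfolding g_def by simp
  define k where "k = (\<lambda>i. (4 / 10^(n+2)) * (1/10::real)^i)"
  have sk: "summable k" unfolding k_def by (rule geo_summ)
  have kb: "\<bar>g (Suc i)\<bar> \<le> k i" for i
  proof -
    have "\<bar>real_of_int (e (Suc i + n))\<bar> \<le> 4" using b[of "Suc i + n"] by linarith
    hence "\<bar>real_of_int (e (Suc i + n))\<bar> / 10^Suc (Suc i + n) \<le> 4 / 10^Suc (Suc i + n)"
      by (intro divide_right_mono) simp_all
    also have "\<dots> = k i" unfolding k_def by (simp add: power_add power_divide field_simps)
    finally show ?thesis unfolding g_def f_def by (simp add: abs_divide)
  qed
  have ksum: "(\<Sum>i. k i) = 4 / (9 * 10^(n+1))"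
    unfolding k_def by (subst suminf_mult) (simp_all add: suminf_geometric field_simps)
  have "(\<Sum>i. g (Suc i)) \<le> (\<Sum>i. k i)"
    using kb by (intro suminf_le[OF _ sg1 sk]) (auto simp: abs_le_iff)
  moreover have "-(\<Sum>i. k i) \<le> (\<Sum>i. g (Suc i))"
  proof -
    have "(\<Sum>i. - k i) \<le> (\<Sum>i. g (Suc i))"
      using kb by (intro suminf_le[OF _ _ sg1]) (use summable_minus[OF sk] in \<open>auto simp: abs_le_iff minus_le_iff\<close>)
    thus ?thesis by (simp add: suminf_minus[OF sk])
  qed
  ultimately have "\<bar>g 0\<bar> \<le> 4 / (9 * 10^(n+1))" using h ksum by linarith
  hence "\<bar>real_of_int (e n)\<bar> / 10^(n+1) \<le> 4 / (9 * 10^(n+1))"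
    unfolding g_def f_def by (simp add: abs_divide)
  hence "\<bar>real_of_int (e n)\<bar> \<le> 4/9" by (simp add: field_simps)
  hence "\<bar>e n\<bar> < 1" by linarith
  thus ?case by simp
qed

lemma subsingleton_dim:
  fixes E :: "real set"
  assumes sub: "\<And>x y. x \<in> E \<Longrightarrow> y \<in> E \<Longrightarrow> x = y"
  shows "\<not> hausdorff_dim E > 0"
proof
  have diam: "diameter E = 0"
  proof (cases "E = {}")
    case False
    then obtain x where "x \<in> E" by auto
    hence "E = {x}" using sub by auto
    thus ?thesis by simp
  qed simp
  have bd: "bounded E"
  proof (cases "E = {}")
    case False
    then obtain x where "x \<in> E" by auto
    hence "E = {x}" using sub by auto
    thus ?thesis by simp
  qed simp
  have hm: "hausdorff_measure s E = 0" if "s > 0" for s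
  proof -
    have "hausdorff_pre s \<delta> E = 0" if "\<delta> > 0" for \<delta>
    proof -
      have "hausdorff_pre s \<delta> E \<le> (\<Sum>i. ennreal (diameter ((\<lambda>_::nat. E) i) powr s))"
        unfolding hausdorff_pre_def
        by (rule INF_lower) (use bd diam that in auto)
      also have "\<dots> = 0" using diam by simp
      finally show ?thesis by simp
    qed
    thus ?thesis unfolding hausdorff_measure_def by simp
  qed
  assume "hausdorff_dim E > 0"
  then obtain z where z: "0 < z" "z < hausdorff_dim E" using dense by blast
  then obtain r where r: "z = ereal r" by (cases z) auto
  have "hausdorff_dim E \<le> ereal r" unfolding hausdorff_dim_def
    by (rule Inf_lower) (use hm z r in auto)
  thus False using z r by simp
qed

theorem mainTheorem5:
  shows "\<not> (\<exists>(E :: real set) (a :: real). E \<subseteq> digitsC \<and> hausdorff_dim E > 0 \<and> (\<lambda>x. x + a) ` E \<subseteq> digitsD)"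
proof
  assume "\<exists>(E :: real set) (a :: real). E \<subseteq> digitsC \<and> hausdorff_dim E > 0 \<and> (\<lambda>x. x + a) ` E \<subseteq> digitsD"
  then obtain E a where EC: "E \<subseteq> digitsC" and pos: "hausdorff_dim E > 0"
    and ED: "(\<lambda>x. x + a) ` E \<subseteq> digitsD" by blast
  have "x = y" if xy: "x \<in> E" "y \<in> E" for x y
  proof -
    obtain c where c: "\<forall>n. c n \<in> {0,1}" "x = (\<Sum>n. real (c n) / 10 ^ Suc n)"
      using xy EC unfolding digitsC_def by blast
    obtain c' where c': "\<forall>n. c' n \<in> {0,1}" "y = (\<Sum>n. real (c' n) / 10 ^ Suc n)"
      using xy EC unfolding digitsC_def by blast
    obtain d where d: "\<forall>n. d n \<in> {0,2}" "x + a = (\<Sum>n. real (d n) / 10 ^ Suc n)"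
      using xy ED unfolding digitsD_def by blast
    obtain d' where d': "\<forall>n. d' n \<in> {0,2}" "y + a = (\<Sum>n. real (d' n) / 10 ^ Suc n)"
      using xy ED unfolding digitsD_def by blast
    have sm: "summable (\<lambda>n. real (f n) / 10 ^ Suc n)" if "\<forall>n. f n \<le> (2::nat)" for f
    proof -
      have "summable (\<lambda>n. real_of_int (int (f n)) / 10 ^ Suc n)"
        proof (rule digits_summable)
        fix n show "\<bar>int (f n)\<bar> \<le> 4" using that[rule_format, of n] by linarith
      qed
      thus ?thesis by simp
    qed
    have s1: "summable (\<lambda>n. real (c n) / 10 ^ Suc n)" proof (intro sm allI)
      fix n have "c n \<in> {0,1}" using c(1) by blast
      thus "c n \<le> 2" by auto
    qed
    have s2: "summable (\<lambda>n. real (c' n) / 10 ^ Suc n)" proof (intro sm allI)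
      fix n have "c' n \<in> {0,1}" using c'(1) by blast
      thus "c' n \<le> 2" by auto
    qed
    have s3: "summable (\<lambda>n. real (d n) / 10 ^ Suc n)" proof (intro sm allI)
      fix n have "d n \<in> {0,2}" using d(1) by blast
      thus "d n \<le> 2" by auto
    qed
    have s4: "summable (\<lambda>n. real (d' n) / 10 ^ Suc n)" proof (intro sm allI)
      fix n have "d' n \<in> {0,2}" using d'(1) by blast
      thus "d' n \<le> 2" by auto
    qed
    define e where "e = (\<lambda>n. int (d n) - int (d' n) - int (c n) + int (c' n))"
    have "(\<Sum>n. real_of_int (e n) / 10^Suc n) =
      (\<Sum>n. real (d n) / 10 ^ Suc n - real (d' n) / 10 ^ Suc n - real (c n) / 10 ^ Suc n + real (c' n) / 10 ^ Suc n)"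
      unfolding e_def by (simp add: diff_divide_distrib add_divide_distrib)
    also have "\<dots> = (x + a) - (y + a) - x + y"
      using s1 s2 s3 s4 c d c' d'
      by (simp add: suminf_add suminf_diff summable_add summable_diff)
    also have "\<dots> = 0" by simp
    finally have s0: "(\<Sum>n. real_of_int (e n) / 10^Suc n) = 0" .
    have dg: "(c n = 0 \<or> c n = 1) \<and> (c' n = 0 \<or> c' n = 1) \<and> (d n = 0 \<or> d n = 2) \<and> (d' n = 0 \<or> d' n = 2)" for n
      using c(1) c'(1) d(1) d'(1) by blast
    have b: "\<bar>e n\<bar> \<le> 4" for n using dg[of n] unfolding e_def by auto
    have "c n = c' n" for n
    proof -
      have "e n = 0" by (rule digits_zero[OF b s0])
      thus ?thesis using dg[of n] unfolding e_def by auto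
    qed
    thus ?thesis using c c' by simp
  qed
  thus False using subsingleton_dim pos by blast
qed

end
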